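(* Consider the two-type branching process in random environment with geometric offspring laws described in the context, started from $z=(z_1,z_2)\in\mathbb N_0^2$, and let $S_i(k)=X_i(1)+\dots+X_i(k)$, $S_i(0)=0$. There is a constant $C$ such that for every $\varepsilon>0$, every $i\in\{1,2\}$, every $n\ge1$ and every realization of the environment $\mathbf\Pi$, $$\mathbf P_z\Big(\max_{k\le n}\big|\log Z_i(k)-S_i(k)\big|\ge\varepsilon\sqrt n,\ Z_i(n)>0\ \Big|\ \mathbf\Pi\Big)\le C z_i\,n\,e^{-\varepsilon\sqrt n}.$$
   Context: Environment: $(P_1,P_2)$ is a random vector in $(0,1)^2$; $\mathbf Q=(Q_1,Q_2)$ with $Q_i(\{j\})=P_i(1-P_i)^j$, $j\in\mathbb N_0$; the environment $\mathbf\Pi=(\mathbf Q(n))_{n\ge1}$ consists of i.i.d. copies of $\mathbf Q$ (parameters $(P_1(n),P_2(n))$). Given $\mathbf\Pi$ and $Z(n)=(z_1,z_2)$, $Z(n+1)$ is distributed as $\big(\sum_{j=1}^{z_1}\xi_1^{(n)}(j),\sum_{j=1}^{z_2}\xi_2^{(n)}(j)\big)$ with, conditionally on $\mathbf\Pi$, independent $\xi_i^{(n)}(j)$ of law $Q_i(n+1)$. $\mathbf P_z$ is the law with $Z(0)=z$. $X_i(n)=\log\frac{1-P_i(n)}{P_i(n)}$ is the logarithm of the mean of $Q_i(n)$. *)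

theory Defs
  imports "HOL-Probability.Probability"
begin

fun iid_sum_pmf :: "nat pmf \<Rightarrow> nat \<Rightarrow> nat pmf" where
  "iid_sum_pmf q 0 = return_pmf 0"
| "iid_sum_pmf q (Suc z) = bind_pmf q (\<lambda>a. map_pmf (\<lambda>b. a + b) (iid_sum_pmf q z))"

definition comp :: "nat \<Rightarrow> nat \<times> nat \<Rightarrow> nat" where
  "comp i s = (if i = 1 then fst s else snd s)"

text \<open>Environment realisation: env m i = P_i(m) (m \<ge> 1, i \<in> {1,2}).
  One generation step from state s using the offspring laws Q(m):
  Q_i(m) is geometric with Q_i(m){j} = P_i(m) (1 - P_i(m))^j; given the
  environment the offspring numbers are independent.\<close>
definition bp_step :: "(nat \<Rightarrow> nat \<Rightarrow> real) \<Rightarrow> nat \<Rightarrow> nat \<times> nat \<Rightarrow> (nat \<times> nat) pmf" where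
  "bp_step env m s =
     bind_pmf (iid_sum_pmf (geometric_pmf (env m 1)) (fst s))
       (\<lambda>a. map_pmf (\<lambda>b. (a, b)) (iid_sum_pmf (geometric_pmf (env m 2)) (snd s)))"

text \<open>Quenched law (given the environment) of the path [Z(0), ..., Z(n)] with Z(0) = z.
  Z(k+1) is obtained from Z(k) using Q(k+1).\<close>
fun bp_path :: "(nat \<Rightarrow> nat \<Rightarrow> real) \<Rightarrow> nat \<times> nat \<Rightarrow> nat \<Rightarrow> (nat \<times> nat) list pmf" where
  "bp_path env z 0 = return_pmf [z]"
| "bp_path env z (Suc n) =
     bind_pmf (bp_path env z n) (\<lambda>xs. map_pmf (\<lambda>y. xs @ [y]) (bp_step env (Suc n) (last xs)))"

definition Xenv :: "(nat \<Rightarrow> nat \<Rightarrow> real) \<Rightarrow> nat \<Rightarrow> nat \<Rightarrow> real" where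
  "Xenv env i m = ln ((1 - env m i) / env m i)"

definition Senv :: "(nat \<Rightarrow> nat \<Rightarrow> real) \<Rightarrow> nat \<Rightarrow> nat \<Rightarrow> real" where
  "Senv env i k = (\<Sum>m = 1..k. Xenv env i m)"

end

theory Submission imports Defs begin

lemma int_bind_pmf:
  fixes f :: "'b \<Rightarrow> real"
  assumes "\<And>x. \<bar>f x\<bar> \<le> B"
  shows "measure_pmf.expectation (bind_pmf M N) f = measure_pmf.expectation M (\<lambda>x. measure_pmf.expectation (N x) f)"
  unfolding measure_pmf_bind
  apply (rule integral_bind[where K="count_space UNIV" and B=B and B'=1])
  using assms measure_pmf_in_subprob_algebra by auto

definition pgf :: "nat pmf \<Rightarrow> real \<Rightarrow> real" where
  "pgf \<mu> s = measure_pmf.expectation \<mu> (\<lambda>n. s ^ n)"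

lemma pgf_bounds: "0 \<le> s \<Longrightarrow> s \<le> 1 \<Longrightarrow> 0 \<le> pgf \<mu> s \<and> pgf \<mu> s \<le> 1"
proof -
  assume s: "0 \<le> s" "s \<le> 1"
  have "pgf \<mu> s \<le> measure_pmf.expectation \<mu> (\<lambda>n. 1)"
    unfolding pgf_def
    apply (rule integral_mono)
    using s by (auto intro!: measure_pmf.integrable_const_bound[where B=1] AE_I2 power_le_one)
  moreover have "0 \<le> pgf \<mu> s" unfolding pgf_def using s by auto
  ultimately show ?thesis by simp
qed

lemma pgf_bind: "0 \<le> s \<Longrightarrow> s \<le> 1 \<Longrightarrow>
  pgf (bind_pmf M N) s = measure_pmf.expectation M (\<lambda>x. pgf (N x) s)"
  unfolding pgf_def by (rule int_bind_pmf[where B=1]) (auto intro: power_le_one)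

lemma pgf_return[simp]: "pgf (return_pmf x) s = s ^ x"
  unfolding pgf_def by simp

lemma pgf_iid: "0 \<le> s \<Longrightarrow> s \<le> 1 \<Longrightarrow> pgf (iid_sum_pmf q z) s = pgf q s ^ z"
proof (induction z)
  case 0 then show ?case by simp
next
  case (Suc z)
  have "pgf (iid_sum_pmf q (Suc z)) s =
        measure_pmf.expectation q (\<lambda>a. pgf (map_pmf (\<lambda>b. a + b) (iid_sum_pmf q z)) s)"
    using Suc.prems by (simp add: pgf_bind)
  also have "\<dots> = measure_pmf.expectation q (\<lambda>a. s ^ a * pgf (iid_sum_pmf q z) s)"
    unfolding pgf_def by (simp add: power_add)
  also have "\<dots> = pgf q s * pgf (iid_sum_pmf q z) s"
    unfolding pgf_def by simp
  finally show ?case using Suc by simp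
qed

lemma pgf_geometric:
  assumes p: "0 < p" "p < 1" and s: "0 \<le> s" "s \<le> 1"
  shows "pgf (geometric_pmf p) s = p / (1 - (1 - p) * s)"
proof -
  have lt: "\<bar>(1 - p) * s\<bar> < 1" using p s
    by (smt (verit) mult_left_le mult_nonneg_nonneg)
  have *: "(\<lambda>n. (1 - p) ^ n * p * s ^ n) sums (p / (1 - (1 - p) * s))"
  proof -
    have "(\<lambda>n. p * ((1 - p) * s) ^ n) sums (p * (1 / (1 - (1 - p) * s)))"
      by (intro sums_mult geometric_sums) (use lt in auto)
    then show ?thesis by (simp add: power_mult_distrib mult_ac)
  qed
  have "pgf (geometric_pmf p) s =
        (\<integral>n. pmf (geometric_pmf p) n * s ^ n \<partial>count_space UNIV)"
    unfolding pgf_def measure_pmf_eq_density by (subst integral_density) auto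
  also have "integrable (count_space UNIV) (\<lambda>n. pmf (geometric_pmf p) n * s ^ n)"
    using * p s unfolding integrable_count_space_nat_iff
    by (simp add: sums_iff abs_mult)
  hence "(\<integral>n. pmf (geometric_pmf p) n * s ^ n \<partial>count_space UNIV) = p / (1 - (1 - p) * s)"
    using * p by (subst integral_count_space_nat) (simp_all add: sums_iff)
  finally show ?thesis .
qed

fun Gm :: "(nat \<Rightarrow> nat \<Rightarrow> real) \<Rightarrow> nat \<Rightarrow> nat \<Rightarrow> nat \<Rightarrow> nat pmf" where
  "Gm env i z0 0 = return_pmf z0"
| "Gm env i z0 (Suc k) = bind_pmf (Gm env i z0 k) (iid_sum_pmf (geometric_pmf (env (Suc k) i)))"

lemma map_comp_step:
  assumes "i \<in> {1,2}"
  shows "map_pmf (comp i) (bp_step env m s) = iid_sum_pmf (geometric_pmf (env m i)) (comp i s)"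
proof (cases "i = 1")
  case True
  then show ?thesis unfolding bp_step_def comp_def
    by (simp add: map_bind_pmf map_pmf_comp bind_return_pmf' [unfolded return_pmf_def] )
       (simp add: map_pmf_def[symmetric] bind_pmf_const)
next
  case False
  with assms have "i = 2" by auto
  then show ?thesis unfolding bp_step_def comp_def
    by (simp add: map_bind_pmf map_pmf_comp bind_pmf_const)
qed

lemma length_bp_path: "xs \<in> set_pmf (bp_path env z n) \<Longrightarrow> length xs = Suc n"
  by (induction n arbitrary: xs) auto

lemma nth_bp_path:
  "k \<le> n \<Longrightarrow> map_pmf (\<lambda>xs. xs ! k) (bp_path env z n) = map_pmf last (bp_path env z k)"
proof (induction n)
  case 0 then show ?case by simp
next
  case (Suc n)
  show ?case
  proof (cases "k = Suc n")
    case True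
    have "map_pmf (\<lambda>xs. xs ! k) (bp_path env z n') = map_pmf last (bp_path env z n')" if "n' = k" for n'
    proof (intro map_pmf_cong refl)
      fix x assume "x \<in> set_pmf (bp_path env z n')"
      then have "length x = Suc k" using that length_bp_path by blast
      then show "x ! k = last x" by (metis diff_Suc_1 last_conv_nth list.size(3) nat.distinct(1))
    qed
    then show ?thesis using True by simp
  next
    case False
    then have k: "k \<le> n" using Suc by auto
    have "map_pmf (\<lambda>xs. xs ! k) (bp_path env z (Suc n)) =
      bind_pmf (bp_path env z n) (\<lambda>xs. map_pmf (\<lambda>y. (xs @ [y]) ! k) (bp_step env (Suc n) (last xs)))"
      by (simp add: map_bind_pmf map_pmf_comp o_def)
    also have "\<dots> = bind_pmf (bp_path env z n) (\<lambda>xs. return_pmf (xs ! k))"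
    proof (intro bind_pmf_cong refl)
      fix xs assume "xs \<in> set_pmf (bp_path env z n)"
      then have "length xs = Suc n" by (rule length_bp_path)
      with k have "\<And>y. (xs @ [y]) ! k = xs ! k" by (simp add: nth_append)
      then show "map_pmf (\<lambda>y. (xs @ [y]) ! k) (bp_step env (Suc n) (last xs)) = return_pmf (xs ! k)"
        by (simp add: map_pmf_const)
    qed
    also have "\<dots> = map_pmf (\<lambda>xs. xs ! k) (bp_path env z n)"
      by (simp add: map_pmf_def)
    finally show ?thesis using Suc.IH k by simp
  qed
qed

lemma last_bp_path:
  assumes "i \<in> {1,2}"
  shows "map_pmf (\<lambda>xs. comp i (last xs)) (bp_path env z k) = Gm env i (comp i z) k"
proof (induction k)
  case 0 then show ?case by simp
next
  case (Suc k)
  have "map_pmf (\<lambda>xs. comp i (last xs)) (bp_path env z (Suc k)) =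
     bind_pmf (bp_path env z k) (\<lambda>xs. map_pmf (comp i) (bp_step env (Suc k) (last xs)))"
    by (simp add: map_bind_pmf map_pmf_comp o_def)
  also have "\<dots> = bind_pmf (bp_path env z k) (\<lambda>xs. iid_sum_pmf (geometric_pmf (env (Suc k) i)) (comp i (last xs)))"
    using assms by (simp add: map_comp_step)
  also have "\<dots> = bind_pmf (map_pmf (\<lambda>xs. comp i (last xs)) (bp_path env z k)) (iid_sum_pmf (geometric_pmf (env (Suc k) i)))"
    by (simp add: bind_map_pmf)
  finally show ?case using Suc by simp
qed

lemma marginal:
  assumes "i \<in> {1,2}" "k \<le> n"
  shows "map_pmf (\<lambda>xs. comp i (xs ! k)) (bp_path env z n) = Gm env i (comp i z) k"
proof -
  have "map_pmf (\<lambda>xs. comp i (xs ! k)) (bp_path env z n) = map_pmf (comp i) (map_pmf (\<lambda>xs. xs ! k) (bp_path env z n))"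
    by (simp add: map_pmf_comp)
  also have "\<dots> = map_pmf (comp i) (map_pmf last (bp_path env z k))"
    using assms by (simp add: nth_bp_path)
  also have "\<dots> = Gm env i (comp i z) k"
    using last_bp_path[OF assms(1)] by (simp add: map_pmf_comp)
  finally show ?thesis .
qed

lemma iid_zero_support: "y \<in> set_pmf (iid_sum_pmf q 0) \<Longrightarrow> y = 0" by simp

lemma step_zero:
  assumes "i \<in> {1,2}" "comp i s = 0" "y \<in> set_pmf (bp_step env m s)"
  shows "comp i y = 0"
proof -
  have "comp i y \<in> set_pmf (map_pmf (comp i) (bp_step env m s))" using assms(3) by simp
  also have "set_pmf (map_pmf (comp i) (bp_step env m s)) = set_pmf (iid_sum_pmf (geometric_pmf (env m i)) 0)"
    using map_comp_step[OF assms(1)] assms(2) by metis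
  finally show ?thesis by simp
qed

lemma path_zero:
  assumes "i \<in> {1,2}"
  shows "xs \<in> set_pmf (bp_path env z n) \<Longrightarrow> k < n \<Longrightarrow> comp i (xs ! k) = 0 \<Longrightarrow> comp i (xs ! Suc k) = 0"
proof (induction n arbitrary: xs k)
  case 0 then show ?case by simp
next
  case (Suc n)
  then obtain ys y where xs: "xs = ys @ [y]" and ys: "ys \<in> set_pmf (bp_path env z n)"
    and y: "y \<in> set_pmf (bp_step env (Suc n) (last ys))" by auto
  have ly: "length ys = Suc n" using ys by (rule length_bp_path)
  show ?case
  proof (cases "Suc k = Suc n")
    case True
    have "last ys = ys ! n" using ly by (metis diff_Suc_1 last_conv_nth list.size(3) nat.distinct(1))
    then have "comp i (last ys) = 0" using Suc.prems ly xs True by (simp add: nth_append)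
    then have "comp i y = 0" using step_zero[OF assms _ y] by simp
    then show ?thesis using True xs ly by (simp add: nth_append)
  next
    case False
    then have "k < n" using Suc.prems by simp
    then show ?thesis using Suc.IH[OF ys] Suc.prems ly xs by (simp add: nth_append)
  qed
qed

lemma path_zero':
  assumes "i \<in> {1,2}" "xs \<in> set_pmf (bp_path env z n)" "k \<le> l" "l \<le> n" "comp i (xs ! k) = 0"
  shows "comp i (xs ! l) = 0"
  using assms(3,4)
proof (induction l)
  case 0 then show ?case using assms(5) by simp
next
  case (Suc l)
  show ?case
  proof (cases "k = Suc l")
    case True then show ?thesis using assms(5) by simp
  next
    case False
    then show ?thesis using Suc path_zero[OF assms(1,2)] by simp
  qed
qed

lemma Senv_Suc: "Senv env i (Suc k) = Senv env i k + Xenv env i (Suc k)"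
  unfolding Senv_def by simp

lemma Gm_pgf:
  assumes env: "\<forall>m\<ge>1. \<forall>j\<in>{1,2}. 0 < env m j \<and> env m j < 1" and i: "i \<in> {1,2}"
  shows "\<exists>A\<ge>0. exp (- Senv env i k) + A \<ge> 1 \<and>
     (\<forall>s. 0 \<le> s \<longrightarrow> s < 1 \<longrightarrow> pgf (Gm env i z0 k) s = (1 - 1 / (exp (- Senv env i k) / (1 - s) + A)) ^ z0)"
proof (induction k)
  case 0
  have "pgf (Gm env i z0 0) s = (1 - 1 / (exp (- Senv env i 0) / (1 - s) + 0)) ^ z0" if "s < 1" for s
    using that by (simp add: Senv_def)
  then show ?case by (intro exI[of _ 0]) (simp add: Senv_def)
next
  case (Suc k)
  then obtain A where A: "A \<ge> 0" "exp (- Senv env i k) + A \<ge> 1"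
    and H: "\<And>s. 0 \<le> s \<Longrightarrow> s < 1 \<Longrightarrow> pgf (Gm env i z0 k) s = (1 - 1 / (exp (- Senv env i k) / (1 - s) + A)) ^ z0"
    by blast
  define p where "p = env (Suc k) i"
  define u where "u = exp (- Senv env i k)"
  have p: "0 < p" "p < 1" using env i unfolding p_def by auto
  have u: "u > 0" unfolding u_def by simp
  have u': "exp (- Senv env i (Suc k)) = u * (p / (1 - p))"
  proof -
    have "exp (- Senv env i (Suc k)) = u / exp (ln ((1 - p) / p))"
      unfolding u_def Senv_Suc Xenv_def p_def by (simp add: exp_diff)
    also have "\<dots> = u * (p / (1 - p))" using p by simp
    finally show ?thesis .
  qed
  show ?case
  proof (intro exI[of _ "A + u"] conjI allI impI)
    show "0 \<le> A + u" using A u by simp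
    have "u * (p / (1 - p)) \<ge> 0" using u p by simp
    then show "1 \<le> exp (- Senv env i (Suc k)) + (A + u)" using A u' u_def by simp
  next
    fix s :: real assume s: "0 \<le> s" "s < 1"
    define g where "g = p / (1 - (1 - p) * s)"
    have den: "1 - (1 - p) * s > 0" using p s
      by (smt (verit) mult_left_le mult_nonneg_nonneg)
    have "(1 - p) * s < 1 - p" using p s by (simp add: mult_strict_left_mono)
    then have "p < 1 - (1 - p) * s" by linarith
    then have g: "0 \<le> g" "g < 1" unfolding g_def using p s den by (simp_all add: divide_less_eq_1_pos)
    have "pgf (Gm env i z0 (Suc k)) s =
          measure_pmf.expectation (Gm env i z0 k) (\<lambda>y. pgf (iid_sum_pmf (geometric_pmf p) y) s)"
      using s by (simp add: pgf_bind p_def)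
    also have "\<dots> = measure_pmf.expectation (Gm env i z0 k) (\<lambda>y. g ^ y)"
      using s p by (simp add: pgf_iid pgf_geometric g_def)
    also have "\<dots> = pgf (Gm env i z0 k) g" unfolding pgf_def ..
    also have "\<dots> = (1 - 1 / (u / (1 - g) + A)) ^ z0" using H g u_def by simp
    also have "u / (1 - g) = u * (p / (1 - p)) / (1 - s) + u"
    proof -
      have "1 - g = (1 - p) * (1 - s) / (1 - (1 - p) * s)"
        unfolding g_def using p s den by (simp add: field_simps)
      moreover have pos: "(1 - p) * (1 - s) > 0" using p s by simp
      ultimately have "u / (1 - g) = u * (1 - (1 - p) * s) / ((1 - p) * (1 - s))" using den by simp
      also have "\<dots> = u * (p / (1 - p)) / (1 - s) + u"
      proof -
        have nz: "1 - p \<noteq> 0" "1 - s \<noteq> 0" using p s by auto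
        have "u * (1 - (1 - p) * s) = u * p + u * ((1 - p) * (1 - s))" by (simp add: algebra_simps)
        then have "u * (1 - (1 - p) * s) / ((1 - p) * (1 - s)) = u * p / ((1 - p) * (1 - s)) + u"
          using nz by (simp add: add_divide_distrib)
        then show ?thesis by simp
      qed
      finally show ?thesis .
    qed
    finally show "pgf (Gm env i z0 (Suc k)) s = (1 - 1 / (exp (- Senv env i (Suc k)) / (1 - s) + (A + u))) ^ z0"
      using u' by (simp add: ac_simps)
  qed
qed

lemma diffpow: "0 \<le> b \<Longrightarrow> b \<le> a \<Longrightarrow> a \<le> (1::real) \<Longrightarrow> a ^ z - b ^ z \<le> real z * (a - b)"
proof (induction z)
  case 0 then show ?case by simp
next
  case (Suc z)
  have "a ^ Suc z - b ^ Suc z = a * (a ^ z - b ^ z) + (a - b) * b ^ z" by (simp add: algebra_simps)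
  also have "\<dots> \<le> 1 * (real z * (a - b)) + (a - b) * 1"
  proof (intro add_mono mult_mono)
    show "a ^ z - b ^ z \<le> real z * (a - b)" using Suc by simp
    show "b ^ z \<le> 1" using Suc.prems by (simp add: power_le_one)
    show "0 \<le> a ^ z - b ^ z" using Suc.prems by (simp add: power_mono)
  qed (use Suc.prems in auto)
  finally show ?case by (simp add: algebra_simps)
qed

lemma prob_le_expect:
  fixes \<nu> :: "nat pmf"
  assumes "\<And>n. indicator S n * c \<le> f n" "\<And>n. \<bar>f n\<bar> \<le> B"
  shows "measure_pmf.prob \<nu> S * c \<le> measure_pmf.expectation \<nu> f"
proof -
  have "measure_pmf.prob \<nu> S * c = measure_pmf.expectation \<nu> (\<lambda>n. indicator S n * c)"
    by simp
  also have "\<dots> \<le> measure_pmf.expectation \<nu> f"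
  proof (rule integral_mono)
    show "integrable \<nu> (\<lambda>n. indicator S n * c)"
      by (rule measure_pmf.integrable_const_bound[where B="\<bar>c\<bar>"]) (auto simp: indicator_def)
    show "integrable \<nu> f"
      by (rule measure_pmf.integrable_const_bound[where B="B"]) (auto simp: assms)
  qed (use assms in auto)
  finally show ?thesis .
qed

lemma pow_le_exp: "N \<ge> 1 \<Longrightarrow> (1 - 1 / real N) ^ N \<le> exp (-1)"
proof -
  assume N: "N \<ge> 1"
  have "(1 - 1 / real N) ^ N \<le> exp (- 1 / real N) ^ N"
    using N exp_ge_add_one_self[of "- 1 / real N"] by (intro power_mono) (auto simp: field_simps)
  also have "\<dots> = exp (-1)" by (subst exp_of_nat_mult[symmetric]) (use N in simp)
  finally show ?thesis .
qed

lemma pow_ge_exp: "N \<ge> 1 \<Longrightarrow> (real N / (real N + 1)) ^ N \<ge> exp (-1)"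
proof -
  assume N: "N \<ge> 1"
  have "(1 + 1 / real N) ^ N \<le> exp (1 / real N) ^ N"
    using N exp_ge_add_one_self[of "1 / real N"] by (intro power_mono) (auto simp: field_simps)
  also have "\<dots> = exp 1" by (subst exp_of_nat_mult[symmetric]) (use N in simp)
  finally have a: "(1 + 1 / real N) ^ N \<le> exp 1" .
  have "real N / (real N + 1) = inverse (1 + 1 / real N)" using N by (simp add: field_simps)
  then have "(real N / (real N + 1)) ^ N = inverse ((1 + 1 / real N) ^ N)" by (simp add: power_inverse)
  moreover have "inverse (exp 1) \<le> inverse ((1 + 1 / real N) ^ N)"
    using a by (intro le_imp_inverse_le) (auto intro!: zero_less_power add_pos_nonneg)
  ultimately show ?thesis by (simp add: exp_minus)
qed

locale lfpgf =
  fixes \<nu> :: "nat pmf" and z0 :: nat and u A :: real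
  assumes u: "u > 0" and A: "A \<ge> 0" "u + A \<ge> 1"
    and H: "\<And>s. 0 \<le> s \<Longrightarrow> s < 1 \<Longrightarrow> pgf \<nu> s = (1 - 1 / (u / (1 - s) + A)) ^ z0"
begin

lemma upper:
  assumes a: "a > 0"
  shows "measure_pmf.prob \<nu> {n. a \<le> real n} \<le> 2 * z0 / (u * a)"
proof -
  define N where "N = nat \<lceil>a\<rceil>"
  have N: "N \<ge> 1" "real N \<ge> a" using a unfolding N_def by linarith+
  define s where "s = 1 - 1 / real N"
  have s: "0 \<le> s" "s < 1" using N unfolding s_def by (auto simp: field_simps)
  have set: "{n. a \<le> real n} = {n. N \<le> n}" using N unfolding N_def by (auto simp: le_nat_iff)
  have "measure_pmf.prob \<nu> {n. N \<le> n} * (1 - s ^ N) \<le> measure_pmf.expectation \<nu> (\<lambda>n. 1 - s ^ n)"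
  proof (rule prob_le_expect[where B=1])
    fix n show "indicator {n. N \<le> n} n * (1 - s ^ N) \<le> 1 - s ^ n"
      using s by (auto simp: indicator_def power_decreasing power_le_one)
    show "\<bar>1 - s ^ n\<bar> \<le> 1" using s by (auto simp: power_le_one)
  qed
  also have "measure_pmf.expectation \<nu> (\<lambda>n. 1 - s ^ n) = 1 - pgf \<nu> s"
    unfolding pgf_def using s
    by (subst Bochner_Integration.integral_diff) (auto intro!: measure_pmf.integrable_const_bound[where B=1] AE_I2 power_le_one)
  also have "\<dots> = 1 ^ z0 - (1 - 1 / (u / (1 - s) + A)) ^ z0" using H s by simp
  also have "\<dots> \<le> real z0 * (1 - (1 - 1 / (u / (1 - s) + A)))"
  proof (rule diffpow)
    have "u / (1 - s) \<ge> u" using s u by (simp add: field_simps)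
    then have D: "u / (1 - s) + A \<ge> 1" using A by linarith
    then show "0 \<le> 1 - 1 / (u / (1 - s) + A)" by simp
    show "1 - 1 / (u / (1 - s) + A) \<le> 1" using D by simp
  qed simp
  also have "\<dots> = real z0 / (u / (1 - s) + A)" by simp
  also have "\<dots> \<le> real z0 / (u / (1 - s))"
  proof -
    have pos: "u / (1 - s) > 0" using u s by simp
    have "0 < (u / (1 - s) + A) * (u / (1 - s))" using pos A by (intro mult_pos_pos) auto
    then show ?thesis by (rule divide_left_mono[rotated 2]) (use A in auto)
  qed
  also have "\<dots> = real z0 / (u * real N)" using N unfolding s_def by simp
  also have "\<dots> \<le> real z0 / (u * a)"
    using N u a by (intro divide_left_mono mult_left_mono mult_pos_pos) auto
  finally have P: "measure_pmf.prob \<nu> {n. N \<le> n} * (1 - s ^ N) \<le> real z0 / (u * a)" .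
  have "s ^ N \<le> exp (-1)" unfolding s_def by (rule pow_le_exp[OF N(1)])
  moreover have "exp (-1) \<le> (1/2::real)"
    using exp_ge_add_one_self[of 1] by (simp add: exp_minus field_simps)
  ultimately have "1 - s ^ N \<ge> 1/2" by linarith
  then have "measure_pmf.prob \<nu> {n. N \<le> n} * (1/2) \<le> real z0 / (u * a)"
    using P by (smt (verit) measure_nonneg mult_left_mono)
  then have "measure_pmf.prob \<nu> {n. N \<le> n} \<le> 2 * real z0 / (u * a)" by (simp add: field_simps)
  then show ?thesis using set by simp
qed

lemma lower:
  assumes b: "b \<ge> 1"
  shows "measure_pmf.prob \<nu> {n. 0 < n \<and> real n \<le> b} \<le> 3 * z0 * u * b"
proof -
  define N where "N = nat \<lfloor>b\<rfloor>"
  have N: "N \<ge> 1" "real N \<le> b" using b unfolding N_def by linarith+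
  define s where "s = real N / (real N + 1)"
  have s: "0 \<le> s" "s < 1" using N unfolding s_def by (auto simp: field_simps)
  have set: "{n. 0 < n \<and> real n \<le> b} = {n. 0 < n \<and> n \<le> N}" using N unfolding N_def
    by (auto intro: le_nat_floor)
  have "measure_pmf.prob \<nu> {n. 0 < n \<and> n \<le> N} * s ^ N \<le> measure_pmf.expectation \<nu> (\<lambda>n. s ^ n - 0 ^ n)"
  proof (rule prob_le_expect[where B=1])
    fix n show "indicator {n. 0 < n \<and> n \<le> N} n * s ^ N \<le> s ^ n - 0 ^ n"
      using s by (cases n) (auto simp: indicator_def power_decreasing power_le_one simp del: power_Suc)
    show "\<bar>s ^ n - 0 ^ n\<bar> \<le> 1" using s by (cases n) (auto intro!: mult_le_one power_le_one)
  qed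
  also have "measure_pmf.expectation \<nu> (\<lambda>n. s ^ n - 0 ^ n) = pgf \<nu> s - pgf \<nu> 0"
    unfolding pgf_def using s
    by (subst Bochner_Integration.integral_diff) (auto intro!: measure_pmf.integrable_const_bound[where B=1] AE_I2 power_le_one)
  also have "\<dots> = (1 - 1 / (u / (1 - s) + A)) ^ z0 - (1 - 1 / (u + A)) ^ z0" using H s by simp
  also have "\<dots> \<le> real z0 * ((1 - 1 / (u / (1 - s) + A)) - (1 - 1 / (u + A)))"
  proof (rule diffpow)
    have "u / (1 - s) \<ge> u" using s u by (simp add: field_simps)
    then have D: "u / (1 - s) + A \<ge> u + A" by linarith
    show "0 \<le> 1 - 1 / (u + A)" using A by simp
    show "1 - 1 / (u + A) \<le> 1 - 1 / (u / (1 - s) + A)" using D A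
      by (simp add: frac_le)
    show "1 - 1 / (u / (1 - s) + A) \<le> 1" using D A by simp
  qed
  also have "(1 - 1 / (u / (1 - s) + A)) - (1 - 1 / (u + A)) \<le> u * real N"
  proof -
    define D0 where "D0 = u + A"
    define D1 where "D1 = u / (1 - s) + A"
    have "u / (1 - s) = u * (real N + 1)" unfolding s_def by (simp add: field_simps)
    then have D1: "D1 = D0 + u * real N" unfolding D0_def D1_def by (simp add: algebra_simps)
    have D0: "D0 \<ge> 1" using A D0_def by simp
    have "u * real N \<ge> 0" using u by simp
    then have D1p: "D1 \<ge> 1" using D1 D0 by linarith
    have "1 / D0 - 1 / D1 = (D1 - D0) / (D0 * D1)" using D0 D1p
      by (simp add: field_simps)
    also have "\<dots> \<le> (D1 - D0) / 1"
    proof (rule divide_left_mono)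
      show "0 \<le> D1 - D0" using D1 \<open>u * real N \<ge> 0\<close> by simp
      show "1 \<le> D0 * D1" using D0 D1p by (metis mult_mono' mult_1 zero_le_one)
    qed (use D0 D1p in simp)
    finally show ?thesis unfolding D0_def[symmetric] D1_def[symmetric] using D1 by simp
  qed
  then have "real z0 * ((1 - 1 / (u / (1 - s) + A)) - (1 - 1 / (u + A))) \<le> real z0 * (u * real N)"
    by (intro mult_left_mono) auto
  finally have P: "measure_pmf.prob \<nu> {n. 0 < n \<and> n \<le> N} * s ^ N \<le> real z0 * (u * real N)" .
  have e: "s ^ N \<ge> exp (-1)" unfolding s_def by (rule pow_ge_exp[OF N(1)])
  have "measure_pmf.prob \<nu> {n. 0 < n \<and> n \<le> N} * exp (-1) \<le> real z0 * (u * real N)"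
    using P e by (smt (verit) measure_nonneg mult_left_mono)
  then have "measure_pmf.prob \<nu> {n. 0 < n \<and> n \<le> N} \<le> exp 1 * (real z0 * (u * real N))"
    by (simp add: exp_minus field_simps)
  also have "\<dots> \<le> 3 * (real z0 * (u * b))"
    using exp_le N u by (intro mult_mono mult_left_mono) auto
  finally show ?thesis using set by (simp add: mult_ac)
qed

end

lemma k_bound:
  assumes env: "\<forall>m\<ge>1. \<forall>j\<in>{1,2}. 0 < env m j \<and> env m j < 1" and i: "i \<in> {1,2}"
    and k: "k \<le> n" and x: "x > 0"
  shows "measure_pmf.prob (bp_path env z n)
     ({xs. exp (Senv env i k + x) \<le> real (comp i (xs ! k))} \<union>
      {xs. 0 < comp i (xs ! k) \<and> real (comp i (xs ! k)) \<le> exp (Senv env i k - x)})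
     \<le> 5 * real (comp i z) * exp (- x)"
proof -
  define z0 where "z0 = comp i z"
  define u where "u = exp (- Senv env i k)"
  define f where "f = (\<lambda>xs. comp i (xs ! k))"
  from Gm_pgf[OF env i, of k z0] obtain A where A: "A \<ge> 0" "u + A \<ge> 1"
    and H: "\<And>s. 0 \<le> s \<Longrightarrow> s < 1 \<Longrightarrow> pgf (Gm env i z0 k) s = (1 - 1 / (u / (1 - s) + A)) ^ z0"
    unfolding u_def by blast
  interpret lfpgf "Gm env i z0 k" z0 u A
    by unfold_locales (use A H in \<open>auto simp: u_def\<close>)
  have M: "map_pmf f (bp_path env z n) = Gm env i z0 k"
    unfolding f_def z0_def using marginal[OF i k] .
  have "measure_pmf.prob (bp_path env z n) {xs. exp (Senv env i k + x) \<le> real (comp i (xs ! k))}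
      = measure_pmf.prob (map_pmf f (bp_path env z n)) {m. exp (Senv env i k + x) \<le> real m}"
    by (simp add: f_def vimage_def)
  also have "\<dots> \<le> 2 * z0 / (u * exp (Senv env i k + x))"
    unfolding M by (rule upper) simp
  also have "u * exp (Senv env i k + x) = exp x" unfolding u_def by (simp add: exp_add exp_minus)
  finally have P1: "measure_pmf.prob (bp_path env z n) {xs. exp (Senv env i k + x) \<le> real (comp i (xs ! k))}
      \<le> 2 * z0 * exp (- x)" by (simp add: exp_minus field_simps)
  have "measure_pmf.prob (bp_path env z n) {xs. 0 < comp i (xs ! k) \<and> real (comp i (xs ! k)) \<le> exp (Senv env i k - x)}
      = measure_pmf.prob (map_pmf f (bp_path env z n)) {m. 0 < m \<and> real m \<le> exp (Senv env i k - x)}"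
    by (simp add: f_def vimage_def)
  also have "\<dots> \<le> 3 * z0 * exp (- x)"
  proof (cases "exp (Senv env i k - x) \<ge> 1")
    case True
    have "measure_pmf.prob (map_pmf f (bp_path env z n)) {m. 0 < m \<and> real m \<le> exp (Senv env i k - x)}
        \<le> 3 * z0 * u * exp (Senv env i k - x)" (is "?L \<le> _") unfolding M by (rule lower[OF True])
    moreover have "u * exp (Senv env i k - x) = exp (- x)" unfolding u_def by (simp flip: exp_add)
    ultimately show ?thesis by (metis mult.assoc)
  next
    case False
    have "\<not> (0 < m \<and> real m \<le> exp (Senv env i k - x))" for m :: nat
    proof
      assume "0 < m \<and> real m \<le> exp (Senv env i k - x)"
      then have "1 \<le> real m" "real m \<le> exp (Senv env i k - x)" by auto
      then show False using False by linarith
    qed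
    then have "{m. 0 < m \<and> real m \<le> exp (Senv env i k - x)} = {}" by blast
    then show ?thesis by (simp only: measure_empty) simp
  qed
  finally have P2: "measure_pmf.prob (bp_path env z n) {xs. 0 < comp i (xs ! k) \<and> real (comp i (xs ! k)) \<le> exp (Senv env i k - x)}
      \<le> 3 * z0 * exp (- x)" .
  have "measure_pmf.prob (bp_path env z n)
     ({xs. exp (Senv env i k + x) \<le> real (comp i (xs ! k))} \<union>
      {xs. 0 < comp i (xs ! k) \<and> real (comp i (xs ! k)) \<le> exp (Senv env i k - x)})
     \<le> measure_pmf.prob (bp_path env z n) {xs. exp (Senv env i k + x) \<le> real (comp i (xs ! k))}
      + measure_pmf.prob (bp_path env z n) {xs. 0 < comp i (xs ! k) \<and> real (comp i (xs ! k)) \<le> exp (Senv env i k - x)}"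
    by (rule measure_subadditive) (auto simp: measure_pmf.emeasure_eq_measure)
  then show ?thesis using P1 P2 unfolding z0_def by simp
qed

theorem lemma9:
  "\<exists>C::real. \<forall>(env :: nat \<Rightarrow> nat \<Rightarrow> real) (z :: nat \<times> nat) (\<epsilon>::real) (i::nat) (n::nat).
     (\<forall>m\<ge>1. \<forall>j\<in>{1,2}. 0 < env m j \<and> env m j < 1) \<longrightarrow> \<epsilon> > 0 \<longrightarrow> i \<in> {1,2} \<longrightarrow> n \<ge> 1 \<longrightarrow>
     measure_pmf.prob (bp_path env z n)
       {xs. (\<exists>k\<le>n. \<bar>ln (real (comp i (xs ! k))) - Senv env i k\<bar> \<ge> \<epsilon> * sqrt (real n))
            \<and> comp i (xs ! n) > 0}
     \<le> C * real (comp i z) * real n * exp (- \<epsilon> * sqrt (real n))"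
proof (intro exI[of _ 10] allI impI)
  fix env :: "nat \<Rightarrow> nat \<Rightarrow> real" and z :: "nat \<times> nat" and \<epsilon> :: real and i n :: nat
  assume env: "\<forall>m\<ge>1. \<forall>j\<in>{1,2}. 0 < env m j \<and> env m j < 1" and eps: "\<epsilon> > 0"
    and i: "i \<in> {1,2}" and n: "n \<ge> 1"
  define x where "x = \<epsilon> * sqrt (real n)"
  have x: "x > 0" unfolding x_def using eps n by simp
  define E where "E = {xs. (\<exists>k\<le>n. \<bar>ln (real (comp i (xs ! k))) - Senv env i k\<bar> \<ge> \<epsilon> * sqrt (real n))
            \<and> comp i (xs ! n) > 0}"
  define F where "F = (\<lambda>k. {xs. exp (Senv env i k + x) \<le> real (comp i (xs ! k))} \<union>
      {xs. 0 < comp i (xs ! k) \<and> real (comp i (xs ! k)) \<le> exp (Senv env i k - x)})"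
  have sub: "E \<inter> set_pmf (bp_path env z n) \<subseteq> (\<Union>k\<in>{..n}. F k)"
  proof
    fix xs assume xs: "xs \<in> E \<inter> set_pmf (bp_path env z n)"
    then obtain k where k: "k \<le> n" and dev: "\<bar>ln (real (comp i (xs ! k))) - Senv env i k\<bar> \<ge> x"
      and pos: "comp i (xs ! n) > 0" unfolding E_def x_def by auto
    have posk: "comp i (xs ! k) > 0"
    proof (rule ccontr)
      assume "\<not> comp i (xs ! k) > 0"
      moreover have xsS: "xs \<in> set_pmf (bp_path env z n)" using xs by blast
      ultimately have "comp i (xs ! n) = 0" using path_zero'[OF i xsS k order.refl] by simp
      then show False using pos by simp
    qed
    define Zk where "Zk = real (comp i (xs ! k))"
    have Zk: "Zk > 0" unfolding Zk_def using posk by simp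
    have "xs \<in> F k"
    proof (cases "ln Zk - Senv env i k \<ge> x")
      case True
      then have "exp (Senv env i k + x) \<le> exp (ln Zk)" by simp
      then show ?thesis using Zk unfolding F_def Zk_def by simp
    next
      case False
      then have "ln Zk \<le> Senv env i k - x" using dev unfolding Zk_def by linarith
      then have "exp (ln Zk) \<le> exp (Senv env i k - x)" by simp
      then show ?thesis using Zk posk unfolding F_def Zk_def by simp
    qed
    then show "xs \<in> (\<Union>k\<in>{..n}. F k)" using k by auto
  qed
  have "measure_pmf.prob (bp_path env z n) E = measure_pmf.prob (bp_path env z n) (E \<inter> set_pmf (bp_path env z n))"
    by (simp add: measure_Int_set_pmf)
  also have "\<dots> \<le> measure_pmf.prob (bp_path env z n) (\<Union>k\<in>{..n}. F k)"
    using sub by (intro measure_pmf.finite_measure_mono) auto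
  also have "\<dots> \<le> (\<Sum>k\<in>{..n}. measure_pmf.prob (bp_path env z n) (F k))"
    by (intro measure_pmf.finite_measure_subadditive_finite) auto
  also have "\<dots> \<le> (\<Sum>k\<in>{..n}. 5 * real (comp i z) * exp (- x))"
    unfolding F_def by (intro sum_mono k_bound[OF env i _ x]) auto
  also have "\<dots> = real (Suc n) * (5 * real (comp i z) * exp (- x))" by simp
  also have "\<dots> \<le> (2 * real n) * (5 * real (comp i z) * exp (- x))"
    using n by (intro mult_right_mono) auto
  also have "\<dots> = 10 * real (comp i z) * real n * exp (- \<epsilon> * sqrt (real n))"
    unfolding x_def by simp
  finally show "measure_pmf.prob (bp_path env z n)
       {xs. (\<exists>k\<le>n. \<bar>ln (real (comp i (xs ! k))) - Senv env i k\<bar> \<ge> \<epsilon> * sqrt (real n))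
            \<and> comp i (xs ! n) > 0}
     \<le> 10 * real (comp i z) * real n * exp (- \<epsilon> * sqrt (real n))" unfolding E_def .
qed

end
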